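(* Let $\mathbf{c}\in\mathbb{R}^n_{\ge0}$, $0<r\le 1$ with $\|\mathbf{c}\|_1\le r$, and let $M>0$. Then $$\frac{\Psi_n(1,r)}{\Psi_n\big(1+\tfrac nM,\ r(1+\tfrac nM)\big)}\ge\Big(\frac{M}{M+n}\Big)^{2n}.$$
   Context: Given $\mathbf{c}=(c_1,\dots,c_n)$, define $\Psi_0(u,v)=1$ if $u\ge0$ and $v\ge0$, and $0$ otherwise, and inductively for $i=1,\dots,n$, $\Psi_i(u,v)=\int_{-1}^1\Psi_{i-1}(u-|s|,\,v-|s-c_i|)\,ds$ for $u,v\in\mathbb{R}$. *)

theory Defs
  imports "HOL-Analysis.Analysis"
begin

text \<open>Psi c i u v, with c given as a sequence indexed from 1 (c 1, ..., c n).\<close>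
primrec Psi :: "(nat \<Rightarrow> real) \<Rightarrow> nat \<Rightarrow> real \<Rightarrow> real \<Rightarrow> real" where
  "Psi c 0 u v = (if u \<ge> 0 \<and> v \<ge> 0 then 1 else 0)"
| "Psi c (Suc i) u v =
     integral {-1..1} (\<lambda>s. Psi c i (u - \<bar>s\<bar>) (v - \<bar>s - c (Suc i)\<bar>))"

end

theory Submission
  imports Defs
begin

lemma psi0_eq:
  "Psi c 0 (a - \<bar>s\<bar>) (b - \<bar>s - d\<bar>) = (if s \<in> {max (-a) (d-b) .. min a (d+b)} then 1 else 0)"
  by (auto simp: abs_le_iff)

lemma int0: "(\<lambda>s. Psi c 0 (a - \<bar>s\<bar>) (b - \<bar>s - d\<bar>)) integrable_on {x..y}"
proof -
  have "(\<lambda>s. if s \<in> {max (-a) (d-b) .. min a (d+b)} then (1::real) else 0) integrable_on {x..y}"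
    by (subst integrable_restrict_Int) auto
  then show ?thesis by (subst psi0_eq)
qed

lemma content_max: "measure lborel {a..b::real} = max 0 (b - a)"
  by simp

lemma psi1_eq: "Psi c 1 u v = max 0 (min (min u (c 1 + v)) 1 - max (max (-u) (c 1 - v)) (-1))"
proof -
  have "Psi c 1 u v = integral {-1..1} (\<lambda>s. if s \<in> {max (-u) (c 1-v) .. min u (c 1+v)} then (1::real) else 0)"
    by (simp, rule integral_cong) (auto simp: abs_le_iff)
  also have "\<dots> = integral ({max (-u) (c 1-v) .. min u (c 1+v)} \<inter> {-1..1}) (\<lambda>s. 1::real)"
    by (rule integral_restrict_Int)
  also have "\<dots> = measure lborel {max (max (-u) (c 1 - v)) (-1) .. min (min u (c 1 + v)) 1}"
    by (simp only: Int_atLeastAtMost integral_const_real) simp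
  also have "\<dots> = max 0 (min (min u (c 1 + v)) 1 - max (max (-u) (c 1 - v)) (-1))"
    by (rule content_max)
  finally show ?thesis .
qed

definition lipP :: "(nat \<Rightarrow> real) \<Rightarrow> nat \<Rightarrow> bool" where
  "lipP c k \<longleftrightarrow> (\<forall>u v u' v'. \<bar>Psi c k u v - Psi c k u' v'\<bar> \<le> 2^k * (\<bar>u-u'\<bar> + \<bar>v-v'\<bar>))"

lemma minlip: "\<bar>min (a::real) b - min a' b'\<bar> \<le> \<bar>a-a'\<bar> + \<bar>b-b'\<bar>"
  by (simp add: min_def abs_if)
lemma maxlip: "\<bar>max (a::real) b - max a' b'\<bar> \<le> \<bar>a-a'\<bar> + \<bar>b-b'\<bar>"
  by (simp add: max_def abs_if)

lemma maxlip2: "\<bar>max (-a::real) (d - b) - max (-a') (d - b')\<bar> \<le> \<bar>a-a'\<bar> + \<bar>b-b'\<bar>"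
  by (simp add: max_def abs_if)

lemma maxlip3: "\<bar>max 0 ((a::real) - b) - max 0 (a' - b')\<bar> \<le> \<bar>a-a'\<bar> + \<bar>b-b'\<bar>"
  by (simp add: max_def abs_if)

lemma lip1: "lipP c 1"
  unfolding lipP_def psi1_eq
proof (intro allI)
  fix u v u' v' :: real
  have A: "\<bar>min (min u (c 1 + v)) 1 - min (min u' (c 1 + v')) 1\<bar> \<le> \<bar>u-u'\<bar> + \<bar>v-v'\<bar>"
    using minlip[of "min u (c 1 + v)" 1 "min u' (c 1 + v')" 1] minlip[of u "c 1 + v" u' "c 1 + v'"] by simp
  have B: "\<bar>max (max (-u) (c 1 - v)) (-1) - max (max (-u') (c 1 - v')) (-1)\<bar> \<le> \<bar>u-u'\<bar> + \<bar>v-v'\<bar>"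
    using maxlip[of "max (-u) (c 1 - v)" "-1" "max (-u') (c 1 - v')" "-1"] maxlip2[of u "c 1" v u' v'] by simp
  show "\<bar>max 0 (min (min u (c 1 + v)) 1 - max (max (- u) (c 1 - v)) (- 1)) -
         max 0 (min (min u' (c 1 + v')) 1 - max (max (- u') (c 1 - v')) (- 1))\<bar>
       \<le> 2 ^ 1 * (\<bar>u - u'\<bar> + \<bar>v - v'\<bar>)"
    by (rule order_trans[OF maxlip3]) (use add_mono[OF A B] in simp)
qed


lemma cont_of_lip:
  assumes "lipP c k"
  shows "continuous_on S (\<lambda>s. Psi c k (a - \<bar>s\<bar>) (b - \<bar>s - d\<bar>))"
proof (rule lipschitz_on_continuous_on[where L="2^k*2"], rule lipschitz_onI)
  fix x y :: real
  have "\<bar>Psi c k (a - \<bar>x\<bar>) (b - \<bar>x - d\<bar>) - Psi c k (a - \<bar>y\<bar>) (b - \<bar>y - d\<bar>)\<bar>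
        \<le> 2^k * (\<bar>(a - \<bar>x\<bar>) - (a - \<bar>y\<bar>)\<bar> + \<bar>(b - \<bar>x - d\<bar>) - (b - \<bar>y - d\<bar>)\<bar>)"
    using assms unfolding lipP_def by blast
  also have "\<dots> \<le> 2^k * (\<bar>x - y\<bar> + \<bar>x - y\<bar>)"
  proof (rule mult_left_mono)
    have "\<bar>\<bar>x\<bar> - \<bar>y\<bar>\<bar> \<le> \<bar>x - y\<bar>" by (rule abs_triangle_ineq3)
    moreover have "\<bar>\<bar>x - d\<bar> - \<bar>y - d\<bar>\<bar> \<le> \<bar>(x - d) - (y - d)\<bar>" by (rule abs_triangle_ineq3)
    ultimately show "\<bar>(a - \<bar>x\<bar>) - (a - \<bar>y\<bar>)\<bar> + \<bar>(b - \<bar>x - d\<bar>) - (b - \<bar>y - d\<bar>)\<bar> \<le> \<bar>x - y\<bar> + \<bar>x - y\<bar>"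
      by (simp add: abs_minus_commute)
  qed simp
  finally show "dist (Psi c k (a - \<bar>x\<bar>) (b - \<bar>x - d\<bar>)) (Psi c k (a - \<bar>y\<bar>) (b - \<bar>y - d\<bar>)) \<le> 2 ^ k * 2 * dist x y"
    by (simp add: dist_real_def)
qed simp

lemma lip_step:
  assumes int: "\<And>a b d x y. (\<lambda>s. Psi c k (a - \<bar>s\<bar>) (b - \<bar>s - d\<bar>)) integrable_on {x..y}"
    and L: "lipP c k"
  shows "lipP c (Suc k)"
  unfolding lipP_def
proof (intro allI)
  fix u v u' v' :: real
  define d where "d = c (Suc k)"
  define K where "K = (2::real)^k * (\<bar>u-u'\<bar> + \<bar>v-v'\<bar>)"
  have "\<bar>Psi c (Suc k) u v - Psi c (Suc k) u' v'\<bar> =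
    norm (integral {-1..1} (\<lambda>s. Psi c k (u - \<bar>s\<bar>) (v - \<bar>s - d\<bar>) - Psi c k (u' - \<bar>s\<bar>) (v' - \<bar>s - d\<bar>)))"
    by (simp add: d_def Henstock_Kurzweil_Integration.integral_diff[OF int int])
  also have "\<dots> \<le> integral {-1..1::real} (\<lambda>s. K)"
  proof -
    have hi: "(\<lambda>s. Psi c k (u - \<bar>s\<bar>) (v - \<bar>s - d\<bar>) - Psi c k (u' - \<bar>s\<bar>) (v' - \<bar>s - d\<bar>)) integrable_on {-1..1}"
      using int by (intro integrable_diff) 
    have ki: "(\<lambda>s. K) integrable_on {-1..1::real}" by blast
    have b: "norm (Psi c k (u - \<bar>s\<bar>) (v - \<bar>s - d\<bar>) - Psi c k (u' - \<bar>s\<bar>) (v' - \<bar>s - d\<bar>)) \<le> K" for s :: real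
    proof -
      have "\<bar>Psi c k (u - \<bar>s\<bar>) (v - \<bar>s - d\<bar>) - Psi c k (u' - \<bar>s\<bar>) (v' - \<bar>s - d\<bar>)\<bar>
         \<le> 2^k * (\<bar>(u - \<bar>s\<bar>) - (u' - \<bar>s\<bar>)\<bar> + \<bar>(v - \<bar>s - d\<bar>) - (v' - \<bar>s - d\<bar>)\<bar>)"
        using L unfolding lipP_def by blast
      then show ?thesis by (simp add: K_def)
    qed
    show ?thesis
      by (rule Henstock_Kurzweil_Integration.integral_norm_bound_integral[OF hi ki b])
  qed
  also have "\<dots> = 2^(Suc k) * (\<bar>u-u'\<bar> + \<bar>v-v'\<bar>)" by (simp add: K_def)
  finally show "\<bar>Psi c (Suc k) u v - Psi c (Suc k) u' v'\<bar> \<le> 2^(Suc k) * (\<bar>u-u'\<bar> + \<bar>v-v'\<bar>)" .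
qed

lemma lip_all: "lipP c (Suc k)"
proof (induction k)
  case 0 then show ?case using lip1 by simp
next
  case (Suc k)
  show ?case
    by (rule lip_step[OF _ Suc]) (rule integrable_continuous_interval, rule cont_of_lip[OF Suc])
qed

lemma int_all: "(\<lambda>s. Psi c k (a - \<bar>s\<bar>) (b - \<bar>s - d\<bar>)) integrable_on {x..y}"
proof (cases k)
  case 0 then show ?thesis using int0 by simp
next
  case (Suc j) then show ?thesis
    by (metis integrable_continuous_interval cont_of_lip lip_all)
qed

lemma psi_mono: "u \<le> u' \<Longrightarrow> v \<le> v' \<Longrightarrow> Psi c k u v \<le> Psi c k u' v'"
proof (induction k arbitrary: u v u' v')
  case 0 then show ?case by auto
next
  case (Suc k)
  show ?case unfolding Psi.simps
    by (rule integral_le[OF int_all int_all]) (rule Suc.IH, use Suc.prems in auto)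
qed

lemma psi_nonneg: "0 \<le> Psi c k u v"
proof (induction k arbitrary: u v)
  case 0 then show ?case by auto
next
  case (Suc k)
  show ?case unfolding Psi.simps
    by (rule integral_nonneg[OF int_all]) (rule Suc.IH)
qed


lemma scale:
  assumes "\<forall>i\<in>{1..k}. 0 \<le> c i \<and> c i \<le> 1" and m0: "0 < m" and m1: "m \<le> 1"
  shows "m^k * Psi c k u v \<le> Psi c k (m * u + (1-m) * (\<Sum>i=1..k. c i/2)) (m * v + (1-m) * (\<Sum>i=1..k. c i/2))"
  using assms(1)
proof (induction k arbitrary: u v)
  case 0 then show ?case using m0 by simp
next
  case (Suc k)
  define d where "d = c (Suc k)"
  define p where "p = d / 2"
  define S where "S = (\<Sum>i=1..k. c i/2)"
  have d01: "0 \<le> d" "d \<le> 1" using Suc.prems by (auto simp: d_def)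
  have p01: "0 \<le> p" "p \<le> 1/2" using d01 by (auto simp: p_def)
  have SS: "(\<Sum>i=1..Suc k. c i/2) = S + p" by (simp add: S_def p_def d_def)
  define U where "U = m * u + (1-m) * (S+p)"
  define V where "V = m * v + (1-m) * (S+p)"
  define F where "F = (\<lambda>t. Psi c k (U - \<bar>t\<bar>) (V - \<bar>t - d\<bar>))"
  define a where "a = (1-m) * p - m"
  define b where "b = (1-m) * p + m"
  have IH: "m^k * Psi c k x y \<le> Psi c k (m * x + (1-m) * S) (m * y + (1-m) * S)" for x y
    using Suc.IH[of x y] Suc.prems by (simp add: S_def)
  have Fint: "F integrable_on {x..y}" for x y unfolding F_def by (rule int_all)
  have aff: "((\<lambda>s. F (m * s + (1-m) * p)) has_integral (integral {a..b} F / m)) {-1..1}"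
  proof -
    have h: "(F has_integral integral {a..b} F) (cbox a b)" using Fint by (simp add: has_integral_integral)
    have "((a - (1-m) * p) /\<^sub>R m) = -1" "((b - (1-m) * p) /\<^sub>R m) = 1" using m0 by (auto simp: a_def b_def)
    with has_integral_affinity'[OF h m0, of "(1-m) * p"] show ?thesis by (simp add: divide_inverse mult.commute)
  qed
  have p1: "(1-m) * p \<ge> 0" using m1 p01 by simp
  have p2: "(1-m) * p \<le> 1 - m" using mult_left_mono[of p 1 "1-m"] m1 p01 by simp
  have "m^(Suc k) * Psi c (Suc k) u v = m * integral {-1..1} (\<lambda>s. m^k * Psi c k (u - \<bar>s\<bar>) (v - \<bar>s - d\<bar>))"
    by (simp add: d_def Henstock_Kurzweil_Integration.integral_mult_right)
  also have "\<dots> \<le> m * integral {-1..1} (\<lambda>s. F (m * s + (1-m) * p))"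
  proof (rule mult_left_mono[OF _ less_imp_le[OF m0]], rule integral_le)
    show "(\<lambda>s. m^k * Psi c k (u - \<bar>s\<bar>) (v - \<bar>s - d\<bar>)) integrable_on {-1..1}"
      using integrable_cmul[OF int_all[of c k u v d "-1" 1], of "m ^ k"] by simp
    show "(\<lambda>s. F (m * s + (1-m) * p)) integrable_on {-1..1}" using aff by blast
    fix s :: real
    have t1: "\<bar>m * s + (1-m) * p\<bar> \<le> m * \<bar>s\<bar> + (1-m) * p"
      using abs_triangle_ineq[of "m * s" "(1-m) * p"] m0 m1 p01 by (simp add: abs_mult)
    have t2: "\<bar>m * s + (1-m) * p - d\<bar> \<le> m * \<bar>s - d\<bar> + (1-m) * p"
    proof -
      have e: "m * s + (1-m) * p - d = m * (s-d) + (-((1-m) * p))" by (simp add: d_def p_def algebra_simps)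
      have "\<bar>m * (s-d) + (-((1-m) * p))\<bar> \<le> \<bar>m * (s-d)\<bar> + \<bar>-((1-m) * p)\<bar>" by (rule abs_triangle_ineq)
      also have "\<dots> = m * \<bar>s - d\<bar> + (1-m) * p" using m0 m1 p01 by (simp add: abs_mult)
      finally show ?thesis unfolding e .
    qed
    have "m^k * Psi c k (u - \<bar>s\<bar>) (v - \<bar>s - d\<bar>) \<le> Psi c k (m * (u - \<bar>s\<bar>) + (1-m) * S) (m * (v - \<bar>s - d\<bar>) + (1-m) * S)"
      by (rule IH)
    also have "\<dots> \<le> F (m * s + (1-m) * p)"
      unfolding F_def by (rule psi_mono) (use t1 t2 in \<open>simp_all add: U_def V_def algebra_simps\<close>)
    finally show "m^k * Psi c k (u - \<bar>s\<bar>) (v - \<bar>s - d\<bar>) \<le> F (m * s + (1-m) * p)" .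
  qed
  also have "\<dots> = integral {a..b} F"
    using integral_unique[OF aff] m0 by simp
  also have "\<dots> \<le> integral {-1..1} F"
  proof (rule integral_subset_le[OF _ Fint Fint])
    show "{a..b} \<subseteq> {-1..1}" using p1 p2 by (auto simp: a_def b_def)
  qed (simp add: F_def psi_nonneg)
  also have "\<dots> = Psi c (Suc k) U V" by (simp add: F_def d_def)
  finally show ?case by (simp only: SS U_def V_def)
qed


lemma pos:
  assumes "\<forall>i\<in>{1..k}. 0 \<le> c i \<and> c i \<le> 1"
    and "u > (\<Sum>i=1..k. c i/2)" and "v > (\<Sum>i=1..k. c i/2)"
  shows "0 < Psi c k u v"
  using assms
proof (induction k arbitrary: u v)
  case 0 then show ?case by simp
next
  case (Suc k)
  define d where "d = c (Suc k)"
  define p where "p = d / 2"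
  define S where "S = (\<Sum>i=1..k. c i/2)"
  have d01: "0 \<le> d" "d \<le> 1" using Suc.prems by (auto simp: d_def)
  have p01: "0 \<le> p" "p \<le> 1/2" using d01 by (auto simp: p_def)
  have SS: "(\<Sum>i=1..Suc k. c i/2) = S + p" by (simp add: S_def p_def d_def)
  have u: "u > S + p" and v: "v > S + p" using Suc.prems SS by auto
  define e where "e = min (min (u - S - p) (v - S - p) / 2) (1/2)"
  have e0: "0 < e" using u v by (simp add: e_def)
  have e1: "e \<le> min (u-S-p) (v-S-p) / 2" "e \<le> 1/2" unfolding e_def by (rule min.cobounded1, rule min.cobounded2)
  have e2: "min (u-S-p) (v-S-p) \<le> u-S-p" "min (u-S-p) (v-S-p) \<le> v-S-p" by simp_all
  have e3: "0 < min (u-S-p) (v-S-p)" using u v by simp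
  have gen: "\<And>z a. e \<le> z/2 \<Longrightarrow> z \<le> a \<Longrightarrow> 0 < z \<Longrightarrow> e < a" by linarith
  have eu1: "e < u - S - p" by (rule gen[OF e1(1) e2(1) e3])
  have eu2: "e < v - S - p" by (rule gen[OF e1(1) e2(2) e3])
  note eu = eu1 eu2 e1(2)
  define w where "w = Psi c k (u - p - e) (v - p - e)"
  have w0: "0 < w" unfolding w_def
    by (rule Suc.IH) (use Suc.prems eu in \<open>auto simp: S_def\<close>)
  define h where "h = (\<lambda>s::real. if s \<in> {p - e .. p + e} then w else 0)"
  have hint: "h integrable_on {-1..1}"
    unfolding h_def by (subst integrable_restrict_Int) auto
  have sub: "{p - e .. p + e} \<inter> {-1..1} = {p - e .. p + e}" using p01 eu by auto
  have hval: "integral {-1..1} h = 2 * e * w"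
    unfolding h_def integral_restrict_Int sub using e0 by simp
  have "integral {-1..1} h \<le> integral {-1..1} (\<lambda>s. Psi c k (u - \<bar>s\<bar>) (v - \<bar>s - d\<bar>))"
  proof (rule integral_le[OF hint int_all])
    fix s :: real
    show "h s \<le> Psi c k (u - \<bar>s\<bar>) (v - \<bar>s - d\<bar>)"
    proof (cases "s \<in> {p - e .. p + e}")
      case True
      then have "\<bar>s\<bar> \<le> p + e" "\<bar>s - d\<bar> \<le> p + e" using p01 e0 by (auto simp: d_def p_def abs_le_iff)
      then have "w \<le> Psi c k (u - \<bar>s\<bar>) (v - \<bar>s - d\<bar>)" unfolding w_def by (intro psi_mono) auto
      then show ?thesis using True by (simp add: h_def)
    qed (auto simp: h_def psi_nonneg)
  qed
  moreover have "0 < 2 * e * w" using e0 w0 by simp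
  ultimately show ?case using hval by (simp add: d_def)
qed

theorem mainTheorem17:
  fixes c :: "nat \<Rightarrow> real" and n :: nat and r M :: real
  assumes "\<forall>i\<in>{1..n}. c i \<ge> 0"
    and "0 < r" and "r \<le> 1"
    and "(\<Sum>i=1..n. \<bar>c i\<bar>) \<le> r"
    and "M > 0"
  shows "Psi c n 1 r / Psi c n (1 + real n / M) (r * (1 + real n / M))
           \<ge> (M / (M + real n)) ^ (2 * n)"
proof -
  have c01: "\<forall>i\<in>{1..n}. 0 \<le> c i \<and> c i \<le> 1"
  proof
    fix i assume i: "i \<in> {1..n}"
    have "\<bar>c i\<bar> \<le> (\<Sum>i=1..n. \<bar>c i\<bar>)" by (rule member_le_sum[OF i]) auto
    then show "0 \<le> c i \<and> c i \<le> 1" using i assms by auto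
  qed
  define S where "S = (\<Sum>i=1..n. c i/2)"
  have "S = (\<Sum>i=1..n. \<bar>c i\<bar>) / 2"
    unfolding S_def sum_divide_distrib using assms(1) by (intro sum.cong) auto
  then have S2: "2 * S \<le> r" using assms(4) by simp
  have "0 \<le> S" unfolding S_def using assms(1) by (intro sum_nonneg) auto
  note S = this S2
  define q where "q = M / (M + real n)"
  define l where "l = 1 + real n / M"
  have q0: "0 < q" "q \<le> 1" using assms(5) by (auto simp: q_def)
  have Mn: "M + real n > 0" using assms(5) by simp
  have l': "l = (M + real n) / M" using assms(5) by (simp add: l_def field_simps)
  have ql: "q * l = 1" using Mn assms(5) by (simp add: q_def l')
  have l1: "1 \<le> l" using assms(5) by (simp add: l_def)
  define m where "m = q^2"
  have m0: "0 < m" "m \<le> 1" using q0 by (auto simp: m_def power_le_one)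
  have ml: "m * l = q" using ql by (simp add: m_def power2_eq_square)
  have key: "(1 - m) * S \<le> (1 - q) * r"
  proof -
    have "(1 - m) * S = (1 - q) * ((1 + q) * S)" by (simp add: m_def power2_eq_square algebra_simps)
    also have "\<dots> \<le> (1 - q) * r"
    proof (rule mult_left_mono)
      have "(1 + q) * S \<le> 2 * S" using q0 S by (intro mult_right_mono) auto
      then show "(1 + q) * S \<le> r" using S by linarith
    qed (use q0 in simp)
    finally show ?thesis .
  qed
  have A: "m ^ n * Psi c n l (r * l) \<le> Psi c n (m * l + (1-m) * S) (m * (r * l) + (1-m) * S)"
    unfolding S_def by (rule scale[OF c01 m0])
  also have "\<dots> \<le> Psi c n 1 r"
  proof (rule psi_mono)
    have "(1 - q) * r \<le> 1 - q" using mult_left_mono[of r 1 "1-q"] q0 assms(3) by simp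
    then show "m * l + (1 - m) * S \<le> 1" using key ml by linarith
    have "m * (r * l) = q * r" using ml by (simp add: algebra_simps)
    moreover have "(1 - q) * r = r - q * r" by (simp add: algebra_simps)
    ultimately show "m * (r * l) + (1 - m) * S \<le> r" using key by linarith
  qed
  finally have A: "m ^ n * Psi c n l (r * l) \<le> Psi c n 1 r" .
  have P1: "0 < Psi c n 1 r"
    using pos[OF c01, of 1 r] S assms(2,3) unfolding S_def by linarith
  have "Psi c n 1 r \<le> Psi c n l (r * l)"
    using l1 assms(2) by (intro psi_mono) (auto intro: mult_left_mono[of 1 l r, simplified])
  with P1 have P2: "0 < Psi c n l (r * l)" by linarith
  have "(M / (M + real n)) ^ (2 * n) = m ^ n" by (simp add: q_def m_def power_mult)
  also have "\<dots> \<le> Psi c n 1 r / Psi c n l (r * l)"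
    using A P2 by (simp add: pos_le_divide_eq)
  finally show ?thesis by (simp add: l_def)
qed

end
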